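(* Let $N\ge 2$ UAVs $U_1,\dots,U_N$ communicate only in a multi-hop chain, $U_m$ transmitting only to $U_{m+1}$ ($m=1,\dots,N-1$). Consider the problem of minimizing $$\sum_{n=1}^N\int_0^T\big(p_n(t)+v_n(t)F_n(t)\big)\,dt$$ subject to, for all $n\in\{1,\dots,N\}$, $m\in\{1,\dots,N-1\}$, $t\in[0,T]$: $-B_{m+1}\log_2\!\big(1+\tfrac{G_{m(m+1)}}{\sigma^2}\,\tfrac{p_m(t)}{\chi_{m(m+1)}(t)^{\alpha}}\big)\le -\bar r$; $\chi_{m(m+1)}(t)=\|X_{m(m+1)}(t)\|^2$; $q_n(0)=Q_{n,\mathrm{init}}$, $q_n(T)=Q_{n,\mathrm{final}}$; $v_n(0)=v_{n,\mathrm{init}}$; $F_n(t)=m_n\dot v_n(t)+\Omega(v_n(t))$; $\dot q_n(t)=\Upsilon_n v_n(t)$; and simple bounds $0\le p_n(t)\le P_{\max}$, $\underline V_n\le v_n(t)\le\overline V_n$ (and box bounds on the other variables), with no constraints on the thrusts $F_n$. Then every local optimum of this problem is a global optimum.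
   Context: $X_n(t)=(q_n(t),\delta_n,a_n)$ is the position of $U_n$ (constants $\delta_n,a_n$), $X_{m(m+1)}=X_m-X_{m+1}$; $p_m$ is the transmit power of $U_m$, $\bar r>0$ a required constant rate, $B_{m+1},G_{m(m+1)},\sigma^2>0$ constants, $\alpha>1$ the path-loss exponent, $m_n>0$ the mass, $0<\underline V_n\le\overline V_n$, $\Upsilon_n\in\{-1,1\}$. The drag function $\Omega$ satisfies Assumption 1: $\Omega$ is convex and $v\mapsto v\Omega(v)$ is convex on the admissible speed range $[\underline V_n,\overline V_n]$. *)

theory Defs
  imports "HOL-Analysis.Analysis"
begin

text \<open>Problem data of the multi-hop UAV chain problem.  Indices of UAVs run over
  1..N, indices of links (U_m to U_{m+1}) over 1..N-1.\<close>

record uav_data =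
  nU     :: nat
  Thor   :: real
  Bw     :: "nat \<Rightarrow> real"          \<comment> \<open>B_n (link m uses B_{m+1})\<close>
  Gain   :: "nat \<Rightarrow> real"
  sigma2 :: real
  alpha  :: real
  rbar   :: real
  Pmax   :: real
  Vlo    :: "nat \<Rightarrow> real"
  Vhi    :: "nat \<Rightarrow> real"
  mass   :: "nat \<Rightarrow> real"
  Omega  :: "real \<Rightarrow> real"
  Ups    :: "nat \<Rightarrow> real"
  delta  :: "nat \<Rightarrow> real"
  alt    :: "nat \<Rightarrow> real"
  Qinit  :: "nat \<Rightarrow> real"
  Qfinal :: "nat \<Rightarrow> real"
  vinit  :: "nat \<Rightarrow> real"
  Qlo    :: "nat \<Rightarrow> real"
  Qhi    :: "nat \<Rightarrow> real"
  chimax :: "nat \<Rightarrow> real"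

text \<open>A candidate solution: (p, q, v, F, chi), each indexed by UAV / link and time.\<close>
type_synonym uav_sol =
  "(nat \<Rightarrow> real \<Rightarrow> real) \<times> (nat \<Rightarrow> real \<Rightarrow> real) \<times> (nat \<Rightarrow> real \<Rightarrow> real)
   \<times> (nat \<Rightarrow> real \<Rightarrow> real) \<times> (nat \<Rightarrow> real \<Rightarrow> real)"

definition pos :: "uav_data \<Rightarrow> (nat \<Rightarrow> real \<Rightarrow> real) \<Rightarrow> nat \<Rightarrow> real \<Rightarrow> real \<times> real \<times> real" where
  "pos D q n t = (q n t, delta D n, alt D n)"

definition feasible :: "uav_data \<Rightarrow> uav_sol \<Rightarrow> bool" where
  "feasible D s = (case s of (p, q, v, F, chi) \<Rightarrow>
     (\<forall>n\<in>{1..nU D}.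
        continuous_on {0..Thor D} (p n) \<and> continuous_on {0..Thor D} (F n) \<and>
        (\<forall>t\<in>{0..Thor D}. (q n has_real_derivative (Ups D n * v n t)) (at t within {0..Thor D})) \<and>
        (\<exists>v'. \<forall>t\<in>{0..Thor D}. (v n has_real_derivative v' t) (at t within {0..Thor D}) \<and>
                 F n t = mass D n * v' t + Omega D (v n t)) \<and>
        q n 0 = Qinit D n \<and> q n (Thor D) = Qfinal D n \<and> v n 0 = vinit D n \<and>
        (\<forall>t\<in>{0..Thor D}. 0 \<le> p n t \<and> p n t \<le> Pmax D \<and>
            Vlo D n \<le> v n t \<and> v n t \<le> Vhi D n \<and>
            Qlo D n \<le> q n t \<and> q n t \<le> Qhi D n)) \<and>
     (\<forall>m\<in>{1..nU D - 1}. \<forall>t\<in>{0..Thor D}.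
        chi m t = (norm (pos D q m t - pos D q (m + 1) t))\<^sup>2 \<and>
        chi m t \<le> chimax D m \<and>
        - Bw D (m + 1) * log 2 (1 + Gain D m / sigma2 D * (p m t / chi m t powr alpha D))
          \<le> - rbar D))"

definition objective :: "uav_data \<Rightarrow> uav_sol \<Rightarrow> real" where
  "objective D s = (case s of (p, q, v, F, chi) \<Rightarrow>
     (\<Sum>n=1..nU D. integral {0..Thor D} (\<lambda>t. p n t + v n t * F n t)))"

definition close :: "uav_data \<Rightarrow> real \<Rightarrow> uav_sol \<Rightarrow> uav_sol \<Rightarrow> bool" where
  "close D e s s' = (case s of (p, q, v, F, chi) \<Rightarrow> case s' of (p', q', v', F', chi') \<Rightarrow>
     (\<forall>t\<in>{0..Thor D}.
        (\<forall>n\<in>{1..nU D}. \<bar>p n t - p' n t\<bar> < e \<and> \<bar>q n t - q' n t\<bar> < e \<and>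
                        \<bar>v n t - v' n t\<bar> < e \<and> \<bar>F n t - F' n t\<bar> < e) \<and>
        (\<forall>m\<in>{1..nU D - 1}. \<bar>chi m t - chi' m t\<bar> < e)))"

definition local_opt :: "uav_data \<Rightarrow> uav_sol \<Rightarrow> bool" where
  "local_opt D s = (feasible D s \<and>
     (\<exists>e>0. \<forall>s'. feasible D s' \<and> close D e s s' \<longrightarrow> objective D s \<le> objective D s'))"

definition global_opt :: "uav_data \<Rightarrow> uav_sol \<Rightarrow> bool" where
  "global_opt D s = (feasible D s \<and> (\<forall>s'. feasible D s' \<longrightarrow> objective D s \<le> objective D s'))"

end

theory Submission imports Defs begin

lemma pos_dist2:
  "(norm (pos D q m t - pos D q k t))\<^sup>2 = (q m t - q k t)\<^sup>2 + ((delta D m - delta D k)\<^sup>2 + (alt D m - alt D k)\<^sup>2)"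
  by (simp add: pos_def norm_Pair)

lemma small_ev:
  fixes f :: "real \<Rightarrow> real"
  assumes "continuous_on S f" "compact S" "e > 0"
  shows "eventually (\<lambda>l. \<forall>t\<in>S. l * \<bar>f t\<bar> < e) (at_right 0)"
proof -
  have "bounded (f ` S)" using assms by (simp add: compact_continuous_image compact_imp_bounded)
  then obtain B where B: "B > 0" "\<forall>x\<in>f ` S. norm x \<le> B" using bounded_pos by blast
  have "eventually (\<lambda>l. l < e / B) (at_right (0::real))"
    unfolding eventually_at_right_field using B assms(3) by (intro exI[of _ "e/B"]) auto
  moreover have "eventually (\<lambda>l. 0 < l) (at_right (0::real))" by (rule eventually_at_right_less)
  ultimately show ?thesis
  proof eventually_elim
    case (elim l)
    show ?case
    proof
      fix t assume "t \<in> S"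
      then have "\<bar>f t\<bar> \<le> B" using B by auto
      then have "l * \<bar>f t\<bar> \<le> l * B" using elim by (intro mult_left_mono) auto
      also have "\<dots> < e" using elim B by (simp add: pos_less_divide_eq mult.commute)
      finally show "l * \<bar>f t\<bar> < e" .
    qed
  qed
qed

lemma ev_lt1: "eventually (\<lambda>l. l < (1::real)) (at_right 0)"
  unfolding eventually_at_right_field by (intro exI[of _ 1]) auto

lemma cc_bounds:
  fixes l x y a b :: real
  assumes "0 \<le> l" "l \<le> 1" "a \<le> x" "x \<le> b" "a \<le> y" "y \<le> b"
  shows "a \<le> (1-l)*x + l*y \<and> (1-l)*x + l*y \<le> b"
proof -
  have "(1-l)*x + l*y - a = (1-l)*(x-a) + l*(y-a)" by algebra
  moreover have "(1-l)*(x-a) \<ge> 0" "l*(y-a) \<ge> 0" using assms by auto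
  moreover have "b - ((1-l)*x + l*y) = (1-l)*(b-x) + l*(b-y)" by algebra
  moreover have "(1-l)*(b-x) \<ge> 0" "l*(b-y) \<ge> 0" using assms by auto
  ultimately show ?thesis by linarith
qed

lemma omega_ev:
  fixes Om u u2 :: "real \<Rightarrow> real"
  assumes "continuous_on {a..b} Om" "continuous_on S u" "continuous_on S u2" "compact S"
    "\<forall>t\<in>S. u t \<in> {a..b} \<and> u2 t \<in> {a..b}" "e > 0"
  shows "eventually (\<lambda>l. \<forall>t\<in>S. \<bar>Om ((1-l)*u t + l*u2 t) - Om (u t)\<bar> < e) (at_right 0)"
proof -
  have "uniformly_continuous_on {a..b} Om"
    using assms(1) by (simp add: compact_uniformly_continuous)
  then obtain d where d: "d > 0" "\<forall>x\<in>{a..b}. \<forall>x'\<in>{a..b}. dist x' x < d \<longrightarrow> dist (Om x') (Om x) < e"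
    unfolding uniformly_continuous_on_def using assms(6) by blast
  have c: "continuous_on S (\<lambda>t. u2 t - u t)" using assms(2,3) by (intro continuous_intros)
  have "eventually (\<lambda>l. \<forall>t\<in>S. l * \<bar>u2 t - u t\<bar> < d) (at_right 0)"
    by (rule small_ev[OF c assms(4) d(1)])
  moreover have "eventually (\<lambda>l. 0 < l) (at_right (0::real))" by (rule eventually_at_right_less)
  moreover note ev_lt1
  ultimately show ?thesis
  proof eventually_elim
    case (elim l)
    show ?case
    proof
      fix t assume t: "t \<in> S"
      have ab: "u t \<in> {a..b}" "u2 t \<in> {a..b}" using assms(5) t by auto
      have x'ab: "(1-l)*u t + l*u2 t \<in> {a..b}"
        using cc_bounds[of l a "u t" b "u2 t"] elim ab by auto
      have "dist ((1-l)*u t + l*u2 t) (u t) = l * \<bar>u2 t - u t\<bar>"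
        proof -
        have "(1-l)*u t + l*u2 t - u t = l * (u2 t - u t)" by algebra
        then show ?thesis using elim by (simp add: dist_real_def abs_mult)
      qed
      also have "\<dots> < d" using elim t by auto
      finally have "dist (Om ((1-l)*u t + l*u2 t)) (Om (u t)) < e"
        using d(2) x'ab ab by blast
      then show "\<bar>Om ((1-l)*u t + l*u2 t) - Om (u t)\<bar> < e" by (simp add: dist_real_def)
    qed
  qed
qed

lemma rate_iff:
  fixes c B k p r al :: real
  assumes "c > 0" "B > 0" "k > 0" "p \<ge> 0"
  shows "(- B * log 2 (1 + k * (p / c powr al)) \<le> - r) \<longleftrightarrow> (2 powr (r/B) - 1) / k * c powr al \<le> p"
proof -
  have cp: "c powr al > 0" using assms by simp
  have pos: "1 + k * (p / c powr al) > 0" using assms cp by (simp add: add_pos_nonneg)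
  have "(- B * log 2 (1 + k * (p / c powr al)) \<le> - r) \<longleftrightarrow> r / B \<le> log 2 (1 + k * (p / c powr al))"
    using assms(2) by (simp add: divide_le_eq mult.commute)
  also have "\<dots> \<longleftrightarrow> 2 powr (r/B) \<le> 1 + k * (p / c powr al)"
    by (rule le_log_iff) (use pos in auto)
  also have "\<dots> \<longleftrightarrow> (2 powr (r/B) - 1) / k * c powr al \<le> p"
    using assms(3) cp by (simp add: field_simps)
  finally show ?thesis .
qed

lemma chi_pos:
  fixes c B k p r al :: real
  assumes "r > 0" "- B * log 2 (1 + k * (p / c powr al)) \<le> - r" "c \<ge> 0"
  shows "c > 0"
  using assms by (cases "c = 0") auto

lemma sign_const:
  fixes f :: "real \<Rightarrow> real"
  assumes "continuous_on {0..T} f" "\<forall>t\<in>{0..T}. f t \<noteq> 0" "t \<in> {0..T}"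
  shows "f t * f 0 > 0"
proof (rule ccontr)
  assume nt: "\<not> f t * f 0 > 0"
  have ne: "f t \<noteq> 0" "f 0 \<noteq> 0" using assms by auto
  have cs: "continuous_on {0..t} f" using assms(3) by (intro continuous_on_subset[OF assms(1)]) auto
  have "f 0 < 0 \<and> 0 < f t \<or> f t < 0 \<and> 0 < f 0"
    using ne nt by (metis linorder_neqE_linordered_idom mult_neg_neg mult_pos_pos)
  then obtain x where "0 \<le> x" "x \<le> t" "f x = 0"
    using IVT'[of f 0 0 t] IVT2'[of f t 0 0] cs assms(3) by force
  then show False using assms(2,3) by auto
qed

lemma vcont:
  assumes "\<forall>t\<in>{0..T}. (v has_real_derivative (w t)) (at t within {0..T})"
  shows "continuous_on {0..T} v"
  using assms by (auto simp: continuous_on_eq_continuous_within intro: DERIV_continuous)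

lemma Ovcont:
  fixes v Om :: "real \<Rightarrow> real" and a T :: real
  assumes "continuous_on {0<..} Om" "continuous_on {0..T} v" "\<forall>t\<in>{0..T}. a \<le> v t" "a > 0"
  shows "continuous_on {0..T} (\<lambda>t. Om (v t))"
proof (rule continuous_on_compose2[OF assms(1) assms(2)])
  show "v ` {0..T} \<subseteq> {0<..}"
  proof (clarsimp)
    fix t assume "0 \<le> t" "t \<le> T"
    then have "a \<le> v t" using assms(3) by auto
    then show "0 < v t" using assms(4) by linarith
  qed
qed

lemma obj_n:
  fixes v p F w :: "real \<Rightarrow> real"
  assumes T: "T > 0" and Oc: "continuous_on {0<..} Om" and a: "a > 0"
    and pc: "continuous_on {0..T} p"
    and vd: "\<forall>t\<in>{0..T}. (v has_real_derivative w t) (at t within {0..T}) \<and> F t = M * w t + Om (v t)"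
    and vb: "\<forall>t\<in>{0..T}. a \<le> v t"
  shows "integral {0..T} (\<lambda>t. p t + v t * F t) =
         integral {0..T} (\<lambda>t. p t + v t * Om (v t)) + M / 2 * ((v T)\<^sup>2 - (v 0)\<^sup>2)"
proof -
  have vc: "continuous_on {0..T} v" using vd by (intro vcont[of T v w]) auto
  have oc: "continuous_on {0..T} (\<lambda>t. Om (v t))" by (rule Ovcont[OF Oc vc vb a])
  have gi: "(\<lambda>t. p t + v t * Om (v t)) integrable_on {0..T}"
    by (intro integrable_continuous_interval continuous_intros pc vc oc)
  have ftc: "((\<lambda>t. M * (v t * w t)) has_integral (M/2 * (v T)\<^sup>2 - M/2 * (v 0)\<^sup>2)) {0..T}"
  proof -
    have "((\<lambda>t. M/2 * (v t)\<^sup>2) has_real_derivative M * (v t * w t)) (at t within {0..T})"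
      if "t \<in> {0..T}" for t
      using vd that by (auto intro!: derivative_eq_intros simp: power2_eq_square)
    then have "((\<lambda>t. M * (v t * w t)) has_integral ((\<lambda>t. M/2 * (v t)\<^sup>2) T - (\<lambda>t. M/2 * (v t)\<^sup>2) 0)) {0..T}"
      using T by (intro fundamental_theorem_of_calculus) (auto simp: has_real_derivative_iff_has_vector_derivative)
    then show ?thesis by simp
  qed
  have "integral {0..T} (\<lambda>t. p t + v t * F t) = integral {0..T} (\<lambda>t. (p t + v t * Om (v t)) + M * (v t * w t))"
    using vd by (intro integral_cong) (auto simp: algebra_simps)
  also have "\<dots> = integral {0..T} (\<lambda>t. p t + v t * Om (v t)) + integral {0..T} (\<lambda>t. M * (v t * w t))"
    using gi ftc by (intro integral_add) auto
  also have "integral {0..T} (\<lambda>t. M * (v t * w t)) = M / 2 * ((v T)\<^sup>2 - (v 0)\<^sup>2)"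
    using integral_unique[OF ftc] by (simp add: algebra_simps)
  finally show ?thesis .
qed

definition mix :: "real \<Rightarrow> uav_data \<Rightarrow> uav_sol \<Rightarrow> uav_sol \<Rightarrow> uav_sol" where
  "mix l D s s2 = (case s of (p,q,v,F,chi) \<Rightarrow> case s2 of (p2,q2,v2,F2,chi2) \<Rightarrow>
     ((\<lambda>n t. (1-l)*p n t + l*p2 n t), (\<lambda>n t. (1-l)*q n t + l*q2 n t), (\<lambda>n t. (1-l)* v n t + l* v2 n t),
      (\<lambda>n t. (1-l)*(F n t - Omega D (v n t)) + l*(F2 n t - Omega D (v2 n t)) + Omega D ((1-l)* v n t + l* v2 n t)),
      (\<lambda>m t. (norm (pos D (\<lambda>n t. (1-l)*q n t + l*q2 n t) m t - pos D (\<lambda>n t. (1-l)*q n t + l*q2 n t) (m+1) t))\<^sup>2)))"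

lemma feas1:
  assumes T: "Thor D > 0"
    and hn: "\<forall>n\<in>{1..nU D}. mass D n > 0 \<and> 0 < Vlo D n \<and> Vlo D n \<le> Vhi D n \<and> Ups D n \<in> {-1, 1}"
    and Oc: "continuous_on {0<..} (Omega D)"
    and fs: "feasible D (p,q,v,F,chi)" and fs2: "feasible D (p2,q2,v2,F2,chi2)"
    and l: "0 \<le> l" "l \<le> 1" and n: "n \<in> {1..nU D}"
  shows "continuous_on {0..Thor D} (\<lambda>t. (1-l)*p n t + l*p2 n t) \<and>
   continuous_on {0..Thor D} (\<lambda>t. (1-l)*(F n t - Omega D (v n t)) + l*(F2 n t - Omega D (v2 n t)) + Omega D ((1-l)* v n t + l* v2 n t)) \<and>
   (\<forall>t\<in>{0..Thor D}. ((\<lambda>t. (1-l)*q n t + l*q2 n t) has_real_derivative (Ups D n * ((1-l)* v n t + l* v2 n t))) (at t within {0..Thor D})) \<and>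
   (\<exists>v'. \<forall>t\<in>{0..Thor D}. ((\<lambda>t. (1-l)* v n t + l* v2 n t) has_real_derivative v' t) (at t within {0..Thor D}) \<and>
      (1-l)*(F n t - Omega D (v n t)) + l*(F2 n t - Omega D (v2 n t)) + Omega D ((1-l)* v n t + l* v2 n t)
        = mass D n * v' t + Omega D ((1-l)* v n t + l* v2 n t)) \<and>
   (1-l)*q n 0 + l*q2 n 0 = Qinit D n \<and> (1-l)*q n (Thor D) + l*q2 n (Thor D) = Qfinal D n \<and>
   (1-l)* v n 0 + l* v2 n 0 = vinit D n \<and>
   (\<forall>t\<in>{0..Thor D}. 0 \<le> (1-l)*p n t + l*p2 n t \<and> (1-l)*p n t + l*p2 n t \<le> Pmax D \<and>
      Vlo D n \<le> (1-l)* v n t + l* v2 n t \<and> (1-l)* v n t + l* v2 n t \<le> Vhi D n \<and>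
      Qlo D n \<le> (1-l)*q n t + l*q2 n t \<and> (1-l)*q n t + l*q2 n t \<le> Qhi D n)"
proof -
  let ?T = "Thor D"
  have A: "continuous_on {0..?T} (p n) \<and> continuous_on {0..?T} (F n) \<and>
        (\<forall>t\<in>{0..?T}. (q n has_real_derivative (Ups D n * v n t)) (at t within {0..?T})) \<and>
        (\<exists>v'. \<forall>t\<in>{0..?T}. (v n has_real_derivative v' t) (at t within {0..?T}) \<and>
                 F n t = mass D n * v' t + Omega D (v n t)) \<and>
        q n 0 = Qinit D n \<and> q n ?T = Qfinal D n \<and> v n 0 = vinit D n \<and>
        (\<forall>t\<in>{0..?T}. 0 \<le> p n t \<and> p n t \<le> Pmax D \<and>
            Vlo D n \<le> v n t \<and> v n t \<le> Vhi D n \<and>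
            Qlo D n \<le> q n t \<and> q n t \<le> Qhi D n)"
    using fs n by (simp add: feasible_def)
  have B: "continuous_on {0..?T} (p2 n) \<and> continuous_on {0..?T} (F2 n) \<and>
        (\<forall>t\<in>{0..?T}. (q2 n has_real_derivative (Ups D n * v2 n t)) (at t within {0..?T})) \<and>
        (\<exists>v'. \<forall>t\<in>{0..?T}. (v2 n has_real_derivative v' t) (at t within {0..?T}) \<and>
                 F2 n t = mass D n * v' t + Omega D (v2 n t)) \<and>
        q2 n 0 = Qinit D n \<and> q2 n ?T = Qfinal D n \<and> v2 n 0 = vinit D n \<and>
        (\<forall>t\<in>{0..?T}. 0 \<le> p2 n t \<and> p2 n t \<le> Pmax D \<and>
            Vlo D n \<le> v2 n t \<and> v2 n t \<le> Vhi D n \<and>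
            Qlo D n \<le> q2 n t \<and> q2 n t \<le> Qhi D n)"
    using fs2 n by (simp add: feasible_def)
  obtain w1 where w1: "\<forall>t\<in>{0..?T}. (v n has_real_derivative w1 t) (at t within {0..?T}) \<and>
                 F n t = mass D n * w1 t + Omega D (v n t)" using A by blast
  obtain w2 where w2: "\<forall>t\<in>{0..?T}. (v2 n has_real_derivative w2 t) (at t within {0..?T}) \<and>
                 F2 n t = mass D n * w2 t + Omega D (v2 n t)" using B by blast
  have a: "0 < Vlo D n" using hn n by auto
  have vc: "continuous_on {0..?T} (v n)" using w1 by (intro vcont[of ?T "v n" w1]) auto
  have vc2: "continuous_on {0..?T} (v2 n)" using w2 by (intro vcont[of ?T "v2 n" w2]) auto
  have vlc: "continuous_on {0..?T} (\<lambda>t. (1-l)* v n t + l* v2 n t)" using vc vc2 by (intro continuous_intros)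
  have bnds: "\<forall>t\<in>{0..?T}. 0 \<le> (1-l)*p n t + l*p2 n t \<and> (1-l)*p n t + l*p2 n t \<le> Pmax D \<and>
      Vlo D n \<le> (1-l)* v n t + l* v2 n t \<and> (1-l)* v n t + l* v2 n t \<le> Vhi D n \<and>
      Qlo D n \<le> (1-l)*q n t + l*q2 n t \<and> (1-l)*q n t + l*q2 n t \<le> Qhi D n"
  proof
    fix t assume t: "t \<in> {0..?T}"
    have "0 \<le> p n t \<and> p n t \<le> Pmax D \<and> Vlo D n \<le> v n t \<and> v n t \<le> Vhi D n \<and> Qlo D n \<le> q n t \<and> q n t \<le> Qhi D n"
      using A t by blast
    moreover have "0 \<le> p2 n t \<and> p2 n t \<le> Pmax D \<and> Vlo D n \<le> v2 n t \<and> v2 n t \<le> Vhi D n \<and> Qlo D n \<le> q2 n t \<and> q2 n t \<le> Qhi D n"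
      using B t by blast
    ultimately show "0 \<le> (1-l)*p n t + l*p2 n t \<and> (1-l)*p n t + l*p2 n t \<le> Pmax D \<and>
      Vlo D n \<le> (1-l)* v n t + l* v2 n t \<and> (1-l)* v n t + l* v2 n t \<le> Vhi D n \<and>
      Qlo D n \<le> (1-l)*q n t + l*q2 n t \<and> (1-l)*q n t + l*q2 n t \<le> Qhi D n"
      using cc_bounds[OF l, of 0 "p n t" "Pmax D" "p2 n t"] cc_bounds[OF l, of "Vlo D n" "v n t" "Vhi D n" "v2 n t"]
        cc_bounds[OF l, of "Qlo D n" "q n t" "Qhi D n" "q2 n t"] by blast
  qed
  have oc: "continuous_on {0..?T} (\<lambda>t. Omega D (v n t))" by (rule Ovcont[OF Oc vc _ a]) (use A in blast)
  have oc2: "continuous_on {0..?T} (\<lambda>t. Omega D (v2 n t))" by (rule Ovcont[OF Oc vc2 _ a]) (use B in blast)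
  have ocl: "continuous_on {0..?T} (\<lambda>t. Omega D ((1-l)* v n t + l* v2 n t))" by (rule Ovcont[OF Oc vlc _ a]) (use bnds in blast)
  have c1: "continuous_on {0..?T} (\<lambda>t. (1-l)*p n t + l*p2 n t)" using A B by (intro continuous_intros) auto
  have c2: "continuous_on {0..?T} (\<lambda>t. (1-l)*(F n t - Omega D (v n t)) + l*(F2 n t - Omega D (v2 n t)) + Omega D ((1-l)* v n t + l* v2 n t))"
    using A B oc oc2 ocl by (intro continuous_intros) auto
  have d1: "\<forall>t\<in>{0..?T}. ((\<lambda>t. (1-l)*q n t + l*q2 n t) has_real_derivative (Ups D n * ((1-l)* v n t + l* v2 n t))) (at t within {0..?T})"
  proof
    fix t assume t: "t \<in> {0..?T}"
    have "((\<lambda>t. (1-l)*q n t + l*q2 n t) has_real_derivative ((1-l)*(Ups D n * v n t) + l*(Ups D n * v2 n t))) (at t within {0..?T})"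
      using A B t by (intro DERIV_add DERIV_cmult) auto
    then show "((\<lambda>t. (1-l)*q n t + l*q2 n t) has_real_derivative (Ups D n * ((1-l)* v n t + l* v2 n t))) (at t within {0..?T})"
      by (rule DERIV_cong) (simp add: algebra_simps)
  qed
  have d2: "\<forall>t\<in>{0..?T}. ((\<lambda>t. (1-l)* v n t + l* v2 n t) has_real_derivative ((1-l)*w1 t + l*w2 t)) (at t within {0..?T}) \<and>
      (1-l)*(F n t - Omega D (v n t)) + l*(F2 n t - Omega D (v2 n t)) + Omega D ((1-l)* v n t + l* v2 n t)
        = mass D n * ((1-l)*w1 t + l*w2 t) + Omega D ((1-l)* v n t + l* v2 n t)"
  proof
    fix t assume t: "t \<in> {0..?T}"
    show "((\<lambda>t. (1-l)* v n t + l* v2 n t) has_real_derivative ((1-l)*w1 t + l*w2 t)) (at t within {0..?T}) \<and>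
      (1-l)*(F n t - Omega D (v n t)) + l*(F2 n t - Omega D (v2 n t)) + Omega D ((1-l)* v n t + l* v2 n t)
        = mass D n * ((1-l)*w1 t + l*w2 t) + Omega D ((1-l)* v n t + l* v2 n t)"
    proof
      show "((\<lambda>t. (1-l)* v n t + l* v2 n t) has_real_derivative ((1-l)*w1 t + l*w2 t)) (at t within {0..?T})"
        using w1 w2 t by (intro DERIV_add DERIV_cmult) auto
      show "(1-l)*(F n t - Omega D (v n t)) + l*(F2 n t - Omega D (v2 n t)) + Omega D ((1-l)* v n t + l* v2 n t)
        = mass D n * ((1-l)*w1 t + l*w2 t) + Omega D ((1-l)* v n t + l* v2 n t)"
        using w1 w2 t by (simp add: algebra_simps)
    qed
  qed
  show ?thesis
    using c1 c2 d1 d2 bnds A B by (auto simp: algebra_simps)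
qed

lemma feas2:
  assumes T: "Thor D > 0" and N: "nU D \<ge> 2"
    and hm: "\<forall>m\<in>{1..nU D - 1}. Bw D (m + 1) > 0 \<and> Gain D m > 0"
    and sg: "sigma2 D > 0" and al: "alpha D > 1" and r: "rbar D > 0"
    and fs: "feasible D (p,q,v,F,chi)" and fs2: "feasible D (p2,q2,v2,F2,chi2)"
    and l: "0 \<le> l" "l \<le> 1" and m: "m \<in> {1..nU D - 1}" and t: "t \<in> {0..Thor D}"
  shows "(norm (pos D (\<lambda>n t. (1-l)*q n t + l*q2 n t) m t - pos D (\<lambda>n t. (1-l)*q n t + l*q2 n t) (m+1) t))\<^sup>2 \<le> chimax D m \<and>
    - Bw D (m + 1) * log 2 (1 + Gain D m / sigma2 D * (((1-l)*p m t + l*p2 m t) /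
       (norm (pos D (\<lambda>n t. (1-l)*q n t + l*q2 n t) m t - pos D (\<lambda>n t. (1-l)*q n t + l*q2 n t) (m+1) t))\<^sup>2 powr alpha D))
     \<le> - rbar D"
proof -
  let ?T = "Thor D"
  define dd where "dd = (delta D m - delta D (m+1))\<^sup>2 + (alt D m - alt D (m+1))\<^sup>2"
  define Dd where "Dd = (\<lambda>t. q m t - q (m+1) t)"
  define Dd2 where "Dd2 = (\<lambda>t. q2 m t - q2 (m+1) t)"
  define Dl where "Dl = (1-l) * Dd t + l * Dd2 t"
  define k where "k = Gain D m / sigma2 D"
  define K where "K = (2 powr (rbar D / Bw D (m+1)) - 1) / k"
  have dd0: "dd \<ge> 0" unfolding dd_def by simp
  have mN: "m \<in> {1..nU D}" "m+1 \<in> {1..nU D}" using m N by auto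
  have C1: "\<forall>m\<in>{1..nU D - 1}. \<forall>t\<in>{0..?T}.
        chi m t = (norm (pos D q m t - pos D q (m + 1) t))\<^sup>2 \<and>
        chi m t \<le> chimax D m \<and>
        - Bw D (m + 1) * log 2 (1 + Gain D m / sigma2 D * (p m t / chi m t powr alpha D)) \<le> - rbar D"
    using fs[unfolded feasible_def prod.case] by blast
  have C2: "\<forall>m\<in>{1..nU D - 1}. \<forall>t\<in>{0..?T}.
        chi2 m t = (norm (pos D q2 m t - pos D q2 (m + 1) t))\<^sup>2 \<and>
        chi2 m t \<le> chimax D m \<and>
        - Bw D (m + 1) * log 2 (1 + Gain D m / sigma2 D * (p2 m t / chi2 m t powr alpha D)) \<le> - rbar D"
    using fs2[unfolded feasible_def prod.case] by blast
  have P1: "\<forall>n\<in>{1..nU D}. (\<forall>t\<in>{0..?T}. (q n has_real_derivative (Ups D n * v n t)) (at t within {0..?T})) \<and>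
        q n 0 = Qinit D n \<and> (\<forall>t\<in>{0..?T}. 0 \<le> p n t)"
    using fs by (simp add: feasible_def)
  have P2: "\<forall>n\<in>{1..nU D}. (\<forall>t\<in>{0..?T}. (q2 n has_real_derivative (Ups D n * v2 n t)) (at t within {0..?T})) \<and>
        q2 n 0 = Qinit D n \<and> (\<forall>t\<in>{0..?T}. 0 \<le> p2 n t)"
    using fs2 by (simp add: feasible_def)
  have chiform: "chi m s = Dd s ^ 2 + dd" "chi2 m s = Dd2 s ^ 2 + dd" if "s \<in> {0..?T}" for s
    using C1 C2 m that by (auto simp: pos_dist2 Dd_def Dd2_def dd_def)
  have chipos: "chi m s > 0" "chi2 m s > 0" if s: "s \<in> {0..?T}" for s
  proof -
    have a1: "- Bw D (m + 1) * log 2 (1 + Gain D m / sigma2 D * (p m s / chi m s powr alpha D)) \<le> - rbar D"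
      using C1 m s by blast
    have a2: "- Bw D (m + 1) * log 2 (1 + Gain D m / sigma2 D * (p2 m s / chi2 m s powr alpha D)) \<le> - rbar D"
      using C2 m s by blast
    have b1: "chi m s \<ge> 0" "chi2 m s \<ge> 0" using chiform[OF s] dd0 by auto
    show "chi m s > 0" by (rule chi_pos[OF r a1 b1(1)])
    show "chi2 m s > 0" by (rule chi_pos[OF r a2 b1(2)])
  qed
  have lhs: "(norm (pos D (\<lambda>n t. (1-l)*q n t + l*q2 n t) m t - pos D (\<lambda>n t. (1-l)*q n t + l*q2 n t) (m+1) t))\<^sup>2
     = Dl ^ 2 + dd"
    unfolding pos_dist2 Dl_def Dd_def Dd2_def dd_def by (simp add: algebra_simps)
  have convq: "Dl ^ 2 \<le> (1-l) * Dd t ^ 2 + l * Dd2 t ^ 2"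
  proof -
    have "(1-l) * Dd t ^ 2 + l * Dd2 t ^ 2 - Dl ^ 2 = l * (1-l) * (Dd t - Dd2 t)^2"
      unfolding Dl_def by (simp add: power2_eq_square algebra_simps)
    moreover have "l * (1-l) * (Dd t - Dd2 t)^2 \<ge> 0" using l by simp
    ultimately show ?thesis by linarith
  qed
  have chil_le: "Dl ^ 2 + dd \<le> (1-l) * chi m t + l * chi2 m t"
    using convq chiform[OF t] by (simp add: algebra_simps)
  have chil_pos: "Dl ^ 2 + dd > 0"
  proof (cases "dd > 0")
    case True then show ?thesis by (simp add: add_nonneg_pos)
  next
    case False
    then have dd: "dd = 0" using dd0 by simp
    have qc: "continuous_on {0..?T} (q n)" "continuous_on {0..?T} (q2 n)" if "n \<in> {1..nU D}" for n
      using P1 P2 that by (auto intro!: vcont[of ?T _ "\<lambda>t. Ups D n * _ t"])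
    have dc: "continuous_on {0..?T} Dd" "continuous_on {0..?T} Dd2"
      unfolding Dd_def Dd2_def using qc mN by (auto intro!: continuous_intros)
    have nz: "\<forall>s\<in>{0..?T}. Dd s \<noteq> 0" "\<forall>s\<in>{0..?T}. Dd2 s \<noteq> 0"
      using chipos chiform dd by force+
    have z: "0 \<in> {0..?T}" using T by simp
    have s1: "Dd t * Dd 0 > 0" by (rule sign_const[OF dc(1) nz(1) t])
    have s2: "Dd2 t * Dd2 0 > 0" by (rule sign_const[OF dc(2) nz(2) t])
    have e0: "Dd2 0 = Dd 0" using P1 P2 mN unfolding Dd_def Dd2_def by auto
    have "Dl * Dd 0 = (1-l) * (Dd t * Dd 0) + l * (Dd2 t * Dd2 0)"
      unfolding Dl_def e0 by (simp add: algebra_simps)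
    also have "\<dots> > 0"
    proof (cases "l = 0")
      case True then show ?thesis using s1 by simp
    next
      case False then have "l > 0" using l by simp
      then show ?thesis using s1 s2 l by (intro add_nonneg_pos) auto
    qed
    finally have "Dl \<noteq> 0" by auto
    then show ?thesis using dd by simp
  qed
  have k: "k > 0" using hm m sg unfolding k_def by auto
  have B: "Bw D (m+1) > 0" using hm m by auto
  have K0: "K \<ge> 0" unfolding K_def using k B r
    by (intro divide_nonneg_pos) (auto intro: ge_one_powr_ge_zero simp: diff_ge_0_iff_ge)
  have p0: "0 \<le> p m t" "0 \<le> p2 m t" using P1 P2 mN t by auto
  have a1t: "- Bw D (m + 1) * log 2 (1 + Gain D m / sigma2 D * (p m t / chi m t powr alpha D)) \<le> - rbar D"
      using C1 m t by blast
  have a2t: "- Bw D (m + 1) * log 2 (1 + Gain D m / sigma2 D * (p2 m t / chi2 m t powr alpha D)) \<le> - rbar D"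
      using C2 m t by blast
  have r1: "K * chi m t powr alpha D \<le> p m t"
    using rate_iff[OF chipos(1)[OF t] B k p0(1), of "alpha D" "rbar D"] a1t unfolding K_def k_def by blast
  have r2: "K * chi2 m t powr alpha D \<le> p2 m t"
    using rate_iff[OF chipos(2)[OF t] B k p0(2), of "alpha D" "rbar D"] a2t unfolding K_def k_def by blast
  have "(Dl ^ 2 + dd) powr alpha D \<le> ((1-l) * chi m t + l * chi2 m t) powr alpha D"
    using chil_le chil_pos al by (intro powr_mono2) auto
  also have "\<dots> \<le> (1-l) * chi m t powr alpha D + l * chi2 m t powr alpha D"
    using convex_onD[OF powr_convex[of "alpha D"], of l "chi m t" "chi2 m t"] al l chipos[OF t] by simp
  finally have pw: "(Dl ^ 2 + dd) powr alpha D \<le> (1-l) * chi m t powr alpha D + l * chi2 m t powr alpha D" .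
  have "K * (Dl ^ 2 + dd) powr alpha D \<le> K * ((1-l) * chi m t powr alpha D + l * chi2 m t powr alpha D)"
    using pw K0 by (rule mult_left_mono)
  also have "\<dots> = (1-l) * (K * chi m t powr alpha D) + l * (K * chi2 m t powr alpha D)" by (simp add: algebra_simps)
  also have "\<dots> \<le> (1-l) * p m t + l * p2 m t"
    using r1 r2 l by (intro add_mono mult_left_mono) auto
  finally have rate: "K * (Dl ^ 2 + dd) powr alpha D \<le> (1-l) * p m t + l * p2 m t" .
  have pl0: "0 \<le> (1-l) * p m t + l * p2 m t" using p0 l by simp
  show ?thesis
    unfolding lhs using chil_le l rate_iff[OF chil_pos B k pl0, of "alpha D" "rbar D"] rate
    apply (intro conjI)
    subgoal
    proof -
      have "chi m t \<le> chimax D m" using C1 m t by blast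
      moreover have "chi2 m t \<le> chimax D m" using C2 m t by blast
      ultimately have "(1-l) * chi m t + l * chi2 m t \<le> chimax D m"
        using cc_bounds[OF l, of "min (chi m t) (chi2 m t)" "chi m t" "chimax D m" "chi2 m t"] by simp
      then show ?thesis using chil_le by linarith
    qed
    subgoal unfolding K_def k_def by simp
    done
qed

lemma feas_mix:
  assumes T: "Thor D > 0" and N: "nU D \<ge> 2"
    and hm: "\<forall>m\<in>{1..nU D - 1}. Bw D (m + 1) > 0 \<and> Gain D m > 0"
    and sg: "sigma2 D > 0" and al: "alpha D > 1" and r: "rbar D > 0"
    and hn: "\<forall>n\<in>{1..nU D}. mass D n > 0 \<and> 0 < Vlo D n \<and> Vlo D n \<le> Vhi D n \<and> Ups D n \<in> {-1, 1}"
    and Oc: "continuous_on {0<..} (Omega D)"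
    and fs: "feasible D (p,q,v,F,chi)" and fs2: "feasible D (p2,q2,v2,F2,chi2)"
    and l: "0 \<le> l" "l \<le> 1"
  shows "feasible D (mix l D (p,q,v,F,chi) (p2,q2,v2,F2,chi2))"
  unfolding mix_def feasible_def prod.case
  apply (rule conjI)
   apply (rule ballI)
   apply (rule feas1[OF T hn Oc fs fs2 l], assumption)
  apply (intro ballI conjI)
    apply (rule refl)
  subgoal for m t using feas2[OF T N hm sg al r fs fs2 l, of m t] by blast
  subgoal for m t using feas2[OF T N hm sg al r fs fs2 l, of m t] by blast
  done

lemma feas_basic:
  assumes fs: "feasible D (p,q,v,F,chi)" and n: "n \<in> {1..nU D}"
  shows "continuous_on {0..Thor D} (p n) \<and> continuous_on {0..Thor D} (v n) \<and>
    (\<forall>t\<in>{0..Thor D}. Vlo D n \<le> v n t \<and> v n t \<le> Vhi D n) \<and> v n 0 = vinit D n \<and>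
    (\<exists>w. \<forall>t\<in>{0..Thor D}. (v n has_real_derivative w t) (at t within {0..Thor D}) \<and>
                 F n t = mass D n * w t + Omega D (v n t))"
proof -
  have A: "continuous_on {0..Thor D} (p n) \<and>
        (\<exists>v'. \<forall>t\<in>{0..Thor D}. (v n has_real_derivative v' t) (at t within {0..Thor D}) \<and>
                 F n t = mass D n * v' t + Omega D (v n t)) \<and>
        v n 0 = vinit D n \<and>
        (\<forall>t\<in>{0..Thor D}. Vlo D n \<le> v n t \<and> v n t \<le> Vhi D n)"
    using fs[unfolded feasible_def prod.case] n by blast
  then obtain w where w: "\<forall>t\<in>{0..Thor D}. (v n has_real_derivative w t) (at t within {0..Thor D}) \<and>
                 F n t = mass D n * w t + Omega D (v n t)" by blast
  have "continuous_on {0..Thor D} (v n)" using w by (intro vcont[of _ _ w]) auto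
  then show ?thesis using A by blast
qed

lemma obj_formula:
  assumes T: "Thor D > 0"
    and hn: "\<forall>n\<in>{1..nU D}. mass D n > 0 \<and> 0 < Vlo D n \<and> Vlo D n \<le> Vhi D n \<and> Ups D n \<in> {-1, 1}"
    and Oc: "continuous_on {0<..} (Omega D)"
    and fs: "feasible D (p,q,v,F,chi)"
  shows "objective D (p,q,v,F,chi) = (\<Sum>n=1..nU D. integral {0..Thor D} (\<lambda>t. p n t + v n t * Omega D (v n t))
          + mass D n / 2 * ((v n (Thor D))\<^sup>2 - (v n 0)\<^sup>2))"
  unfolding objective_def prod.case
proof (rule sum.cong[OF refl])
  fix n assume n: "n \<in> {1..nU D}"
  from feas_basic[OF fs n] obtain w where
    pc: "continuous_on {0..Thor D} (p n)" and vb: "\<forall>t\<in>{0..Thor D}. Vlo D n \<le> v n t"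
    and w: "\<forall>t\<in>{0..Thor D}. (v n has_real_derivative w t) (at t within {0..Thor D}) \<and>
                 F n t = mass D n * w t + Omega D (v n t)" by blast
  have a: "Vlo D n > 0" using hn n by auto
  show "integral {0..Thor D} (\<lambda>t. p n t + v n t * F n t) = integral {0..Thor D} (\<lambda>t. p n t + v n t * Omega D (v n t))
          + mass D n / 2 * ((v n (Thor D))\<^sup>2 - (v n 0)\<^sup>2)"
    by (rule obj_n[OF T Oc a pc w vb])
qed

lemma aux_lin: "(M::real) / 2 * (((1-l) * a + l * b) - c) = (1-l) * (M / 2 * (a - c)) + l * (M / 2 * (b - c))"
  by (simp add: field_simps)

lemma obj_mix:
  assumes T: "Thor D > 0"
    and hn: "\<forall>n\<in>{1..nU D}. mass D n > 0 \<and> 0 < Vlo D n \<and> Vlo D n \<le> Vhi D n \<and> Ups D n \<in> {-1, 1}"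
    and Oc: "continuous_on {0<..} (Omega D)"
    and cx: "\<forall>n\<in>{1..nU D}. convex_on {Vlo D n..Vhi D n} (\<lambda>x. x * Omega D x)"
    and fs: "feasible D (p,q,v,F,chi)" and fs2: "feasible D (p2,q2,v2,F2,chi2)"
    and fm: "feasible D (mix l D (p,q,v,F,chi) (p2,q2,v2,F2,chi2))"
    and l: "0 \<le> l" "l \<le> 1"
  shows "objective D (mix l D (p,q,v,F,chi) (p2,q2,v2,F2,chi2)) \<le>
     (1-l) * objective D (p,q,v,F,chi) + l * objective D (p2,q2,v2,F2,chi2)"
proof -
  define pl where "pl = (\<lambda>n t. (1-l)*p n t + l*p2 n t)"
  define ql where "ql = (\<lambda>n t. (1-l)*q n t + l*q2 n t)"
  define vl where "vl = (\<lambda>n t. (1-l)* v n t + l* v2 n t)"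
  define Fl where "Fl = (\<lambda>n t. (1-l)*(F n t - Omega D (v n t)) + l*(F2 n t - Omega D (v2 n t)) + Omega D ((1-l)* v n t + l* v2 n t))"
  define cl where "cl = (\<lambda>m t. (norm (pos D (\<lambda>n t. (1-l)*q n t + l*q2 n t) m t - pos D (\<lambda>n t. (1-l)*q n t + l*q2 n t) (m+1) t))\<^sup>2)"
  have mx: "mix l D (p,q,v,F,chi) (p2,q2,v2,F2,chi2) = (pl,ql,vl,Fl,cl)"
    unfolding mix_def pl_def ql_def vl_def Fl_def cl_def by simp
  have fm': "feasible D (pl,ql,vl,Fl,cl)" using fm mx by simp
  let ?T = "Thor D"
  let ?g = "\<lambda>p v n t. p n t + v n t * Omega D (v n t)"
  have gi: "(\<lambda>t. p n t + v n t * Omega D (v n t)) integrable_on {0..?T}"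
    if f: "feasible D (p,q,v,F,chi)" and n: "n \<in> {1..nU D}" for p q v F chi n
  proof -
    from feas_basic[OF f n] have pc: "continuous_on {0..?T} (p n)" and vc: "continuous_on {0..?T} (v n)"
      and vb: "\<forall>t\<in>{0..?T}. Vlo D n \<le> v n t" by auto
    have a: "Vlo D n > 0" using hn n by auto
    have oc: "continuous_on {0..?T} (\<lambda>t. Omega D (v n t))" by (rule Ovcont[OF Oc vc vb a])
    show ?thesis by (intro integrable_continuous_interval continuous_intros pc vc oc)
  qed
  have per: "integral {0..?T} (\<lambda>t. pl n t + vl n t * Omega D (vl n t)) + mass D n / 2 * ((vl n ?T)\<^sup>2 - (vl n 0)\<^sup>2)
     \<le> (1-l) * (integral {0..?T} (\<lambda>t. p n t + v n t * Omega D (v n t)) + mass D n / 2 * ((v n ?T)\<^sup>2 - (v n 0)\<^sup>2))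
       + l * (integral {0..?T} (\<lambda>t. p2 n t + v2 n t * Omega D (v2 n t)) + mass D n / 2 * ((v2 n ?T)\<^sup>2 - (v2 n 0)\<^sup>2))"
    if n: "n \<in> {1..nU D}" for n
  proof -
    have i1: "(\<lambda>t. p n t + v n t * Omega D (v n t)) integrable_on {0..?T}" by (rule gi[OF fs n])
    have i2: "(\<lambda>t. p2 n t + v2 n t * Omega D (v2 n t)) integrable_on {0..?T}" by (rule gi[OF fs2 n])
    have il: "(\<lambda>t. pl n t + vl n t * Omega D (vl n t)) integrable_on {0..?T}" by (rule gi[OF fm' n])
    have b1: "\<forall>t\<in>{0..?T}. Vlo D n \<le> v n t \<and> v n t \<le> Vhi D n" "v n 0 = vinit D n" using feas_basic[OF fs n] by auto
    have b2: "\<forall>t\<in>{0..?T}. Vlo D n \<le> v2 n t \<and> v2 n t \<le> Vhi D n" "v2 n 0 = vinit D n" using feas_basic[OF fs2 n] by auto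
    have pw: "pl n t + vl n t * Omega D (vl n t) \<le> (1-l) * (p n t + v n t * Omega D (v n t)) + l * (p2 n t + v2 n t * Omega D (v2 n t))"
      if t: "t \<in> {0..?T}" for t
    proof -
      have "vl n t * Omega D (vl n t) \<le> (1-l) * (v n t * Omega D (v n t)) + l * (v2 n t * Omega D (v2 n t))"
        using convex_onD[OF bspec[OF cx n], of l "v n t" "v2 n t"] l b1(1) b2(1) t unfolding vl_def by auto
      then show ?thesis unfolding pl_def by (simp add: algebra_simps)
    qed
    have "integral {0..?T} (\<lambda>t. pl n t + vl n t * Omega D (vl n t)) \<le>
          integral {0..?T} (\<lambda>t. (1-l) * (p n t + v n t * Omega D (v n t)) + l * (p2 n t + v2 n t * Omega D (v2 n t)))"
    proof (rule integral_le[OF il])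
      show "(\<lambda>t. (1-l) * (p n t + v n t * Omega D (v n t)) + l * (p2 n t + v2 n t * Omega D (v2 n t))) integrable_on {0..?T}"
        using integrable_on_cmult_left[OF i1, of "1-l"] integrable_on_cmult_left[OF i2, of l]
        by (intro integrable_add) auto
    qed (use pw in auto)
    also have "\<dots> = (1-l) * integral {0..?T} (\<lambda>t. p n t + v n t * Omega D (v n t)) + l * integral {0..?T} (\<lambda>t. p2 n t + v2 n t * Omega D (v2 n t))"
      by (subst integral_add) (use integrable_on_cmult_left[OF i1, of "1-l"] integrable_on_cmult_left[OF i2, of l] in
        \<open>simp_all only: integral_mult[OF i1, symmetric] integral_mult[OF i2, symmetric] of_real_eq_id id_def\<close>)
    finally have I: "integral {0..?T} (\<lambda>t. pl n t + vl n t * Omega D (vl n t)) \<le> \<dots>" .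
    have vsq: "(vl n ?T)\<^sup>2 \<le> (1-l) * (v n ?T)\<^sup>2 + l * (v2 n ?T)\<^sup>2"
    proof -
      have "(1-l) * (v n ?T)\<^sup>2 + l * (v2 n ?T)\<^sup>2 - (vl n ?T)\<^sup>2 = l * (1-l) * (v n ?T - v2 n ?T)\<^sup>2"
        unfolding vl_def by (simp add: power2_eq_square algebra_simps)
      moreover have "l * (1-l) * (v n ?T - v2 n ?T)\<^sup>2 \<ge> 0" using l by simp
      ultimately show ?thesis by linarith
    qed
    have M: "mass D n / 2 \<ge> 0" using bspec[OF hn n] by simp
    have v0: "vl n 0 = vinit D n" using b1 b2 unfolding vl_def by (simp add: algebra_simps)
    have "mass D n / 2 * ((vl n ?T)\<^sup>2 - (vl n 0)\<^sup>2) \<le> mass D n / 2 * (((1-l) * (v n ?T)\<^sup>2 + l * (v2 n ?T)\<^sup>2) - (vinit D n)\<^sup>2)"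
      using vsq M v0 by (intro mult_left_mono) auto
    also have "\<dots> = (1-l) * (mass D n / 2 * ((v n ?T)\<^sup>2 - (v n 0)\<^sup>2)) + l * (mass D n / 2 * ((v2 n ?T)\<^sup>2 - (v2 n 0)\<^sup>2))"
      unfolding b1(2) b2(2) by (rule aux_lin)
    finally have II: "mass D n / 2 * ((vl n ?T)\<^sup>2 - (vl n 0)\<^sup>2) \<le> (1-l) * (mass D n / 2 * ((v n ?T)\<^sup>2 - (v n 0)\<^sup>2)) + l * (mass D n / 2 * ((v2 n ?T)\<^sup>2 - (v2 n 0)\<^sup>2))" .
    show ?thesis using add_mono[OF I II] by (simp only: distrib_left add_ac)
  qed
  have "objective D (mix l D (p,q,v,F,chi) (p2,q2,v2,F2,chi2)) = objective D (pl,ql,vl,Fl,cl)" using mx by simp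
  also have "\<dots> = (\<Sum>n=1..nU D. integral {0..?T} (\<lambda>t. pl n t + vl n t * Omega D (vl n t)) + mass D n / 2 * ((vl n ?T)\<^sup>2 - (vl n 0)\<^sup>2))"
    by (rule obj_formula[OF T hn Oc fm'])
  also have "\<dots> \<le> (\<Sum>n=1..nU D. (1-l) * (integral {0..?T} (\<lambda>t. p n t + v n t * Omega D (v n t)) + mass D n / 2 * ((v n ?T)\<^sup>2 - (v n 0)\<^sup>2))
       + l * (integral {0..?T} (\<lambda>t. p2 n t + v2 n t * Omega D (v2 n t)) + mass D n / 2 * ((v2 n ?T)\<^sup>2 - (v2 n 0)\<^sup>2)))"
    by (rule sum_mono) (rule per)
  also have "\<dots> = (1-l) * objective D (p,q,v,F,chi) + l * objective D (p2,q2,v2,F2,chi2)"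
    unfolding obj_formula[OF T hn Oc fs] obj_formula[OF T hn Oc fs2]
    by (simp only: sum.distrib flip: sum_distrib_left)
  finally show ?thesis .
qed

lemma aux_abs1: assumes "0 < (l::real)" shows "\<bar>- (l * a) - b\<bar> \<le> l * \<bar>a\<bar> + \<bar>b\<bar>"
proof -
  have h: "\<bar>l*a\<bar> = l*\<bar>a\<bar>" using assms by (simp add: abs_mult)
  show ?thesis using h by arith
qed

lemma aux_abs2: assumes "0 < (l::real)" shows "\<bar>l * a + l^2 * b\<bar> \<le> l * \<bar>a\<bar> + l^2 * \<bar>b\<bar>"
proof -
  have h: "\<bar>l*a\<bar> = l*\<bar>a\<bar>" "\<bar>l^2*b\<bar> = l^2*\<bar>b\<bar>" using assms by (simp_all add: abs_mult)
  show ?thesis using h by arith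
qed

lemma ev_close:
  assumes T: "Thor D > 0"
    and hn: "\<forall>n\<in>{1..nU D}. mass D n > 0 \<and> 0 < Vlo D n \<and> Vlo D n \<le> Vhi D n \<and> Ups D n \<in> {-1, 1}"
    and Oc: "continuous_on {0<..} (Omega D)"
    and fs: "feasible D (p,q,v,F,chi)" and fs2: "feasible D (p2,q2,v2,F2,chi2)"
    and e: "e > 0"
  shows "eventually (\<lambda>l. close D e (p,q,v,F,chi) (mix l D (p,q,v,F,chi) (p2,q2,v2,F2,chi2))) (at_right 0)"
proof -
  let ?T = "Thor D"
  have cpt: "compact {0..?T}" by simp
  have lpos: "eventually (\<lambda>l. 0 < l) (at_right (0::real))" by (rule eventually_at_right_less)
  have qcont: "continuous_on {0..?T} (q n)" "continuous_on {0..?T} (q2 n)" if n: "n \<in> {1..nU D}" for n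
  proof -
    have "\<forall>t\<in>{0..?T}. (q n has_real_derivative (Ups D n * v n t)) (at t within {0..?T})"
      using fs[unfolded feasible_def prod.case] n by blast
    then show "continuous_on {0..?T} (q n)" by (rule vcont)
    have "\<forall>t\<in>{0..?T}. (q2 n has_real_derivative (Ups D n * v2 n t)) (at t within {0..?T})"
      using fs2[unfolded feasible_def prod.case] n by blast
    then show "continuous_on {0..?T} (q2 n)" by (rule vcont)
  qed
  have E1: "eventually (\<lambda>l. \<forall>t\<in>{0..?T}. \<bar>p n t - ((1-l)*p n t + l*p2 n t)\<bar> < e \<and>
        \<bar>q n t - ((1-l)*q n t + l*q2 n t)\<bar> < e \<and> \<bar>v n t - ((1-l)* v n t + l* v2 n t)\<bar> < e \<and>
        \<bar>F n t - ((1-l)*(F n t - Omega D (v n t)) + l*(F2 n t - Omega D (v2 n t)) + Omega D ((1-l)* v n t + l* v2 n t))\<bar> < e)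
     (at_right 0)" if n: "n \<in> {1..nU D}" for n
  proof -
    have fc: "continuous_on {0..?T} (F n)" "continuous_on {0..?T} (F2 n)"
      using fs[unfolded feasible_def prod.case] fs2[unfolded feasible_def prod.case] n by blast+
    note b1 = feas_basic[OF fs n] and b2 = feas_basic[OF fs2 n]
    have a: "Vlo D n > 0" using bspec[OF hn n] by simp
    have oc: "continuous_on {0..?T} (\<lambda>t. Omega D (v n t))" by (rule Ovcont[OF Oc _ _ a]) (use b1 in blast)+
    have oc2: "continuous_on {0..?T} (\<lambda>t. Omega D (v2 n t))" by (rule Ovcont[OF Oc _ _ a]) (use b2 in blast)+
    have Oab: "continuous_on {Vlo D n..Vhi D n} (Omega D)"
      by (rule continuous_on_subset[OF Oc]) (use a in auto)
    have e2: "e/2 > 0" using e by simp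
    have ep: "eventually (\<lambda>l. \<forall>t\<in>{0..?T}. l * \<bar>p2 n t - p n t\<bar> < e) (at_right 0)"
      by (rule small_ev[OF _ cpt e]) (use b1 b2 in \<open>auto intro!: continuous_intros\<close>)
    have eq: "eventually (\<lambda>l. \<forall>t\<in>{0..?T}. l * \<bar>q2 n t - q n t\<bar> < e) (at_right 0)"
      by (rule small_ev[OF _ cpt e]) (use qcont[OF n] in \<open>auto intro!: continuous_intros\<close>)
    have ev: "eventually (\<lambda>l. \<forall>t\<in>{0..?T}. l * \<bar>v2 n t - v n t\<bar> < e) (at_right 0)"
      by (rule small_ev[OF _ cpt e]) (use b1 b2 in \<open>auto intro!: continuous_intros\<close>)
    have eF: "eventually (\<lambda>l. \<forall>t\<in>{0..?T}. l * \<bar>(F2 n t - Omega D (v2 n t)) - (F n t - Omega D (v n t))\<bar> < e/2) (at_right 0)"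
      by (rule small_ev[OF _ cpt e2]) (use fc oc oc2 in \<open>auto intro!: continuous_intros\<close>)
    have eO: "eventually (\<lambda>l. \<forall>t\<in>{0..?T}. \<bar>Omega D ((1-l)* v n t + l* v2 n t) - Omega D (v n t)\<bar> < e/2) (at_right 0)"
      by (rule omega_ev[OF Oab _ _ cpt _ e2]) (use b1 b2 in auto)
    from ep eq ev eF eO lpos show ?thesis
    proof eventually_elim
      case (elim l)
      show ?case
      proof
        fix t assume t: "t \<in> {0..?T}"
        have i1: "p n t - ((1-l)*p n t + l*p2 n t) = - (l * (p2 n t - p n t))" by algebra
        have i2: "q n t - ((1-l)*q n t + l*q2 n t) = - (l * (q2 n t - q n t))" by algebra
        have i3: "v n t - ((1-l)* v n t + l* v2 n t) = - (l * (v2 n t - v n t))" by algebra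
        have i4: "F n t - ((1-l)*(F n t - Omega D (v n t)) + l*(F2 n t - Omega D (v2 n t)) + Omega D ((1-l)* v n t + l* v2 n t))
           = - (l * ((F2 n t - Omega D (v2 n t)) - (F n t - Omega D (v n t)))) - (Omega D ((1-l)* v n t + l* v2 n t) - Omega D (v n t))"
          by algebra
        have l0: "0 < l" using elim by simp
        have "\<bar>F n t - ((1-l)*(F n t - Omega D (v n t)) + l*(F2 n t - Omega D (v2 n t)) + Omega D ((1-l)* v n t + l* v2 n t))\<bar>
           \<le> l * \<bar>(F2 n t - Omega D (v2 n t)) - (F n t - Omega D (v n t))\<bar> + \<bar>Omega D ((1-l)* v n t + l* v2 n t) - Omega D (v n t)\<bar>"
          unfolding i4 by (rule aux_abs1[OF l0])
        moreover have "l * \<bar>(F2 n t - Omega D (v2 n t)) - (F n t - Omega D (v n t))\<bar> < e/2" using elim t by blast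
        moreover have "\<bar>Omega D ((1-l)* v n t + l* v2 n t) - Omega D (v n t)\<bar> < e/2" using elim t by blast
        ultimately have F4: "\<bar>F n t - ((1-l)*(F n t - Omega D (v n t)) + l*(F2 n t - Omega D (v2 n t)) + Omega D ((1-l)* v n t + l* v2 n t))\<bar> < e"
          by linarith
        show "\<bar>p n t - ((1-l)*p n t + l*p2 n t)\<bar> < e \<and>
          \<bar>q n t - ((1-l)*q n t + l*q2 n t)\<bar> < e \<and> \<bar>v n t - ((1-l)* v n t + l* v2 n t)\<bar> < e \<and>
          \<bar>F n t - ((1-l)*(F n t - Omega D (v n t)) + l*(F2 n t - Omega D (v2 n t)) + Omega D ((1-l)* v n t + l* v2 n t))\<bar> < e"
          unfolding i1 i2 i3 using F4 elim t l0 by (simp add: abs_mult)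
      qed
    qed
  qed
  have E2: "eventually (\<lambda>l. \<forall>t\<in>{0..?T}. \<bar>chi m t -
       (norm (pos D (\<lambda>n t. (1-l)*q n t + l*q2 n t) m t - pos D (\<lambda>n t. (1-l)*q n t + l*q2 n t) (m+1) t))\<^sup>2\<bar> < e)
     (at_right 0)" if m: "m \<in> {1..nU D - 1}" for m
  proof -
    have mN: "m \<in> {1..nU D}" "m+1 \<in> {1..nU D}" using m by auto
    define dd where "dd = (delta D m - delta D (m+1))\<^sup>2 + (alt D m - alt D (m+1))\<^sup>2"
    define Dd where "Dd = (\<lambda>t. q m t - q (m+1) t)"
    define X where "X = (\<lambda>t. (q2 m t - q2 (m+1) t) - (q m t - q (m+1) t))"
    have C1: "\<forall>t\<in>{0..?T}. chi m t = (norm (pos D q m t - pos D q (m + 1) t))\<^sup>2"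
      using fs[unfolded feasible_def prod.case] m by blast
    have dc: "continuous_on {0..?T} Dd" "continuous_on {0..?T} X"
      unfolding Dd_def X_def using qcont mN by (auto intro!: continuous_intros)
    have eh: "eventually (\<lambda>l. \<forall>t\<in>{0..?T}. l * \<bar>\<bar>2 * Dd t * X t\<bar> + (X t)\<^sup>2\<bar> < e) (at_right 0)"
      by (rule small_ev[OF _ cpt e]) (use dc in \<open>auto intro!: continuous_intros\<close>)
    from eh lpos ev_lt1 show ?thesis
    proof eventually_elim
      case (elim l)
      show ?case
      proof
        fix t assume t: "t \<in> {0..?T}"
        have c: "chi m t = (Dd t)\<^sup>2 + dd" using C1 t unfolding pos_dist2 Dd_def dd_def by auto
        have cl: "(norm (pos D (\<lambda>n t. (1-l)*q n t + l*q2 n t) m t - pos D (\<lambda>n t. (1-l)*q n t + l*q2 n t) (m+1) t))\<^sup>2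
            = (Dd t + l * X t)\<^sup>2 + dd"
          unfolding pos_dist2 Dd_def dd_def X_def by (simp add: algebra_simps)
        have diff: "(Dd t)\<^sup>2 + dd - ((Dd t + l * X t)\<^sup>2 + dd) = - (l * (2 * Dd t * X t) + l^2 * (X t)\<^sup>2)"
          by (simp add: power2_eq_square algebra_simps)
        have l: "0 < l" "l < 1" using elim by auto
        have "\<bar>l * (2 * Dd t * X t) + l^2 * (X t)\<^sup>2\<bar> \<le> l * \<bar>2 * Dd t * X t\<bar> + l^2 * (X t)\<^sup>2"
          using aux_abs2[OF l(1), of "2 * Dd t * X t" "(X t)\<^sup>2"] by simp
        also have "\<dots> \<le> l * \<bar>2 * Dd t * X t\<bar> + l * (X t)\<^sup>2"
        proof -
          have "l^2 \<le> l" using l by (simp add: power2_eq_square mult_left_le)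
          then show ?thesis by (intro add_left_mono mult_right_mono) auto
        qed
        also have "\<dots> = l * \<bar>\<bar>2 * Dd t * X t\<bar> + (X t)\<^sup>2\<bar>" by (simp add: distrib_left)
        also have "\<dots> < e" using elim t by blast
        finally show "\<bar>chi m t -
          (norm (pos D (\<lambda>n t. (1-l)*q n t + l*q2 n t) m t - pos D (\<lambda>n t. (1-l)*q n t + l*q2 n t) (m+1) t))\<^sup>2\<bar> < e"
          unfolding c cl diff by simp
      qed
    qed
  qed
  have fin1: "eventually (\<lambda>l. \<forall>n\<in>{1..nU D}. \<forall>t\<in>{0..?T}. \<bar>p n t - ((1-l)*p n t + l*p2 n t)\<bar> < e \<and>
        \<bar>q n t - ((1-l)*q n t + l*q2 n t)\<bar> < e \<and> \<bar>v n t - ((1-l)* v n t + l* v2 n t)\<bar> < e \<and>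
        \<bar>F n t - ((1-l)*(F n t - Omega D (v n t)) + l*(F2 n t - Omega D (v2 n t)) + Omega D ((1-l)* v n t + l* v2 n t))\<bar> < e)
     (at_right 0)" by (rule eventually_ball_finite) (use E1 in auto)
  have fin2: "eventually (\<lambda>l. \<forall>m\<in>{1..nU D - 1}. \<forall>t\<in>{0..?T}. \<bar>chi m t -
       (norm (pos D (\<lambda>n t. (1-l)*q n t + l*q2 n t) m t - pos D (\<lambda>n t. (1-l)*q n t + l*q2 n t) (m+1) t))\<^sup>2\<bar> < e)
     (at_right 0)" by (rule eventually_ball_finite) (use E2 in auto)
  from fin1 fin2 show ?thesis
  proof eventually_elim
    case (elim l)
    then show ?case unfolding mix_def close_def prod.case by blast
  qed
qed

theorem theorem2:
  fixes D :: uav_data and s :: uav_sol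
  assumes "nU D \<ge> 2" and "Thor D > 0"
    and "\<forall>m\<in>{1..nU D - 1}. Bw D (m + 1) > 0 \<and> Gain D m > 0"
    and "sigma2 D > 0" and "alpha D > 1" and "rbar D > 0"
    and "\<forall>n\<in>{1..nU D}. mass D n > 0 \<and> 0 < Vlo D n \<and> Vlo D n \<le> Vhi D n \<and> Ups D n \<in> {-1, 1}"
    and "convex_on {0<..} (Omega D)"
    and "\<forall>n\<in>{1..nU D}. convex_on {Vlo D n..Vhi D n} (\<lambda>x. x * Omega D x)"
    and "local_opt D s"
  shows "global_opt D s"
proof -
  obtain p q v F chi where s: "s = (p,q,v,F,chi)" by (metis prod_cases5)
  have fs: "feasible D (p,q,v,F,chi)" using assms(10) s unfolding local_opt_def by simp
  obtain e where e: "e > 0" and loc: "\<forall>s'. feasible D s' \<and> close D e s s' \<longrightarrow> objective D s \<le> objective D s'"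
    using assms(10) unfolding local_opt_def by blast
  have Oc: "continuous_on {0<..} (Omega D)" by (rule convex_on_continuous[OF open_greaterThan assms(8)])
  show ?thesis
    unfolding global_opt_def
  proof (intro conjI allI impI)
    show "feasible D s" using fs s by simp
    fix s2 assume fs2': "feasible D s2"
    obtain p2 q2 v2 F2 chi2 where s2: "s2 = (p2,q2,v2,F2,chi2)" by (metis prod_cases5)
    have fs2: "feasible D (p2,q2,v2,F2,chi2)" using fs2' s2 by simp
    have ev: "eventually (\<lambda>l. close D e (p,q,v,F,chi) (mix l D (p,q,v,F,chi) (p2,q2,v2,F2,chi2)) \<and> 0 < l \<and> l < 1) (at_right 0)"
      using ev_close[OF assms(2) assms(7) Oc fs fs2 e] eventually_at_right_less[of "0::real"] ev_lt1
      by (auto intro: eventually_conj)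
    then obtain b where b: "b > 0" "\<forall>y>0. y < b \<longrightarrow> close D e (p,q,v,F,chi) (mix y D (p,q,v,F,chi) (p2,q2,v2,F2,chi2)) \<and> 0 < y \<and> y < 1"
      unfolding eventually_at_right_field by auto
    define l where "l = b / 2"
    have l0: "0 < l" "l < b" using b(1) unfolding l_def by auto
    have lc: "close D e (p,q,v,F,chi) (mix l D (p,q,v,F,chi) (p2,q2,v2,F2,chi2))" "0 < l" "l < 1"
      using b(2)[rule_format, OF l0] by auto
    have fm: "feasible D (mix l D (p,q,v,F,chi) (p2,q2,v2,F2,chi2))"
      using feas_mix[OF assms(2) assms(1) assms(3) assms(4) assms(5) assms(6) assms(7) Oc fs fs2, of l] lc by simp
    have "objective D s \<le> objective D (mix l D (p,q,v,F,chi) (p2,q2,v2,F2,chi2))"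
      using loc fm lc s by blast
    also have "\<dots> \<le> (1-l) * objective D (p,q,v,F,chi) + l * objective D (p2,q2,v2,F2,chi2)"
      using obj_mix[OF assms(2) assms(7) Oc assms(9) fs fs2 fm] lc by simp
    finally have "l * objective D s \<le> l * objective D s2" using s s2 by (simp add: algebra_simps)
    then show "objective D s \<le> objective D s2" using lc(2) by simp
  qed
qed

end
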